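(* Let $k\ge2$ and $p=p(n)\in[0,1]$. For every $\varepsilon>0$, with probability tending to $1$ as $n\to\infty$, the random cochain $a$ used to construct $Y^k(n,p)$ is a $\mathbb Z_2$-cocycle of $Y^k(n,p)$ (i.e. $\delta a=0$) and satisfies $\|[a]\|\ge\frac12-\varepsilon$; in particular $\tilde H^{k-1}(Y^k(n,p);\mathbb Z_2)\ne0$.
   Context: $Y^k(n,p)$ is the random $k$-dimensional complex on vertex set $[n]$ with complete $(k-1)$-skeleton constructed as follows: choose $a:\binom{[n]}{k}\to\mathbb Z_2$ with values independent and uniform; call $H\in\binom{[n]}{k+1}$ good if $H$ contains an even number of $k$-subsets $F$ with $a(F)=1$; each good $H$ is added as a $k$-face independently with probability $p$. Faces are oriented by a fixed vertex order; over $\mathbb Z_2$ the coboundary is $(\delta f)(H)=\sum_{G\subset H,|G|=|H|-1}f(G)$. For $f\in C^{i}(X;\mathbb Z_2)$, $\|f\|=|\{F\in X_i:f(F)=1\}|/|X_i|$ and $\|[f]\|=\min\{\|f+\delta g\|:g\in C^{i-1}(X;\mathbb Z_2)\}$. *)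

theory Defs
  imports "HOL-Probability.Probability"
begin

text \<open>Faces are finite subsets of the vertex set [n] = {1..n}; an i-face has i+1 vertices.
  Z_2-valued cochains are represented as predicates (True = 1, False = 0), addition is xor.\<close>

definition ksub :: "nat \<Rightarrow> nat \<Rightarrow> nat set set" where
  "ksub n j = {F. F \<subseteq> {1..n} \<and> card F = j}"

definition cobdry :: "(nat set \<Rightarrow> bool) \<Rightarrow> nat set \<Rightarrow> bool" where
  "cobdry f H = odd (card {G. G \<subseteq> H \<and> card G + 1 = card H \<and> f G})"

definition good :: "nat \<Rightarrow> (nat set \<Rightarrow> bool) \<Rightarrow> nat set \<Rightarrow> bool" where
  "good k a H = even (card {F. F \<subseteq> H \<and> card F = k \<and> a F})"

text \<open>The random model: the pair (a, X_k), where a is uniform on the k-subsets of [n]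
  (independent fair bits, False outside) and each good (k+1)-subset is a k-face
  independently with probability p. The complex has complete (k-1)-skeleton.\<close>
definition Ymodel :: "nat \<Rightarrow> nat \<Rightarrow> real \<Rightarrow> ((nat set \<Rightarrow> bool) \<times> nat set set) pmf" where
  "Ymodel k n p =
     do { a \<leftarrow> Pi_pmf (ksub n k) False (\<lambda>_. bernoulli_pmf (1/2));
          S \<leftarrow> Pi_pmf {H \<in> ksub n (k+1). good k a H} False (\<lambda>_. bernoulli_pmf p);
          return_pmf (a, {H. S H}) }"

definition is_cocycle :: "nat set set \<Rightarrow> (nat set \<Rightarrow> bool) \<Rightarrow> bool" where
  "is_cocycle Xk f \<longleftrightarrow> (\<forall>H\<in>Xk. \<not> cobdry f H)"

text \<open>Normalized Hamming norm of a (k-1)-cochain, X_{k-1} = ksub n k.\<close>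
definition cnorm :: "nat \<Rightarrow> nat \<Rightarrow> (nat set \<Rightarrow> bool) \<Rightarrow> real" where
  "cnorm n k f = real (card {F\<in>ksub n k. f F}) / real (card (ksub n k))"

text \<open>(k-2)-cochains: functions supported on X_{k-2} = ksub n (k-1).\<close>
definition cochains :: "nat \<Rightarrow> nat \<Rightarrow> (nat set \<Rightarrow> bool) set" where
  "cochains n j = {g. \<forall>G. g G \<longrightarrow> G \<in> ksub n j}"

definition class_norm :: "nat \<Rightarrow> nat \<Rightarrow> (nat set \<Rightarrow> bool) \<Rightarrow> real" where
  "class_norm n k f = (INF g\<in>cochains n (k-1). cnorm n k (\<lambda>F. f F \<noteq> cobdry g F))"

text \<open>Reduced cohomology H^{k-1}(X;Z_2) = ker delta / im delta is nonzero iff some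
  (k-1)-cocycle is not a coboundary (on X_{k-1}).\<close>
definition cohom_nonzero :: "nat \<Rightarrow> nat \<Rightarrow> nat set set \<Rightarrow> bool" where
  "cohom_nonzero n k Xk \<longleftrightarrow>
     (\<exists>f\<in>cochains n k. is_cocycle Xk f \<and>
        (\<forall>g\<in>cochains n (k-1). \<exists>F\<in>ksub n k. f F \<noteq> cobdry g F))"

end

theory Submission
  imports Defs "HOL-Real_Asymp.Real_Asymp"
begin

lemma bern_flip: "bind_pmf (bernoulli_pmf (1/2)) (\<lambda>b. return_pmf (b \<noteq> d)) = bernoulli_pmf (1/2)"
proof (rule pmf_eqI)
  fix x :: bool
  have "pmf (bind_pmf (bernoulli_pmf (1/2)) (\<lambda>b. return_pmf (b \<noteq> d))) x
        = measure_pmf.expectation (bernoulli_pmf (1/2)) (\<lambda>b. pmf (return_pmf (b \<noteq> d)) x)"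
    by (rule pmf_bind)
  also have "\<dots> = 1/2" by (cases d; cases x) (simp_all add: indicator_def)
  finally show "pmf (bind_pmf (bernoulli_pmf (1/2)) (\<lambda>b. return_pmf (b \<noteq> d))) x = pmf (bernoulli_pmf (1/2)) x"
    by simp
qed

lemma flip_inv:
  assumes "finite A"
  shows "map_pmf (\<lambda>a x. if x \<in> A then a x \<noteq> c x else False) (Pi_pmf A False (\<lambda>_. bernoulli_pmf (1/2)))
         = Pi_pmf A False (\<lambda>_. bernoulli_pmf (1/2))"
proof -
  have "Pi_pmf A False (\<lambda>_. bernoulli_pmf (1/2)) =
        Pi_pmf A False (\<lambda>x. bind_pmf (bernoulli_pmf (1/2)) (\<lambda>b. return_pmf (b \<noteq> c x)))"
    by (rule Pi_pmf_cong) (simp_all only: bern_flip)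
  also have "\<dots> = bind_pmf (Pi_pmf A False (\<lambda>_. bernoulli_pmf (1/2)))
                    (\<lambda>f. Pi_pmf A False (\<lambda>x. return_pmf (f x \<noteq> c x)))"
    by (rule Pi_pmf_bind[OF assms])
  also have "\<dots> = map_pmf (\<lambda>a x. if x \<in> A then a x \<noteq> c x else False) (Pi_pmf A False (\<lambda>_. bernoulli_pmf (1/2)))"
    using assms by (simp add: map_pmf_def)
  finally show ?thesis by simp
qed

lemma tail:
  assumes A: "finite A" "card A = N" "N > 0" and e: "e \<ge> 0"
  shows "measure_pmf.prob (Pi_pmf A False (\<lambda>_. bernoulli_pmf (1/2)))
           {a. real (card {x\<in>A. a x \<noteq> c x}) < (1/2 - e) * N} \<le> exp (-2*e^2*N)"
proof -
  let ?P = "Pi_pmf A False (\<lambda>_. bernoulli_pmf (1/2))"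
  let ?phi = "\<lambda>a x. if x \<in> A then a x \<noteq> c x else False"
  have cardeq: "card {x\<in>A. a x \<noteq> c x} = card {x\<in>A. ?phi a x}" for a
    by (rule arg_cong[where f=card]) auto
  have "map_pmf (\<lambda>a. card {x\<in>A. a x \<noteq> c x}) ?P = map_pmf (\<lambda>f. card {x\<in>A. f x}) (map_pmf ?phi ?P)"
    unfolding pmf.map_comp o_def by (intro map_pmf_cong refl cardeq)
  also have "\<dots> = map_pmf (\<lambda>f. card {x\<in>A. f x}) ?P" by (simp add: flip_inv[OF A(1)])
  also have "\<dots> = binomial_pmf N (1/2)"
    by (rule binomial_pmf_altdef'[symmetric]) (use A in auto)
  finally have D: "map_pmf (\<lambda>a. card {x\<in>A. a x \<noteq> c x}) ?P = binomial_pmf N (1/2)" .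
  have "measure_pmf.prob ?P {a. real (card {x\<in>A. a x \<noteq> c x}) < (1/2 - e) * N}
      = measure_pmf.prob (map_pmf (\<lambda>a. card {x\<in>A. a x \<noteq> c x}) ?P) {x. real x < (1/2 - e) * N}"
    by simp
  also have "\<dots> = measure_pmf.prob (binomial_pmf N (1/2)) {x. real x < (1/2 - e) * N}" by (simp only: D)
  also have "\<dots> \<le> measure_pmf.prob (binomial_pmf N (1/2)) {x. real x \<le> real N * (1/2) - e * N}"
    by (rule measure_pmf.finite_measure_mono) (auto simp: algebra_simps)
  also have "\<dots> \<le> exp (-2 * (e * N)\<^sup>2 / N)"
    by (rule binomial_distribution.prob_le) (use A e in \<open>auto simp: binomial_distribution_def\<close>)
  also have "-2 * (e * N)\<^sup>2 / N = -2*e^2*N" using A by (simp add: power2_eq_square)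
  finally show ?thesis .
qed


lemma finite_ksub: "finite (ksub n j)"
  unfolding ksub_def by (rule finite_subset[of _ "Pow {1..n}"]) auto

lemma card_ksub: "card (ksub n j) = n choose j"
  unfolding ksub_def using n_subsets[of "{1..n}" j] by simp

lemma cochains_img: "cochains n j = (\<lambda>S G. G \<in> S) ` Pow (ksub n j)"
proof
  show "cochains n j \<subseteq> (\<lambda>S G. G \<in> S) ` Pow (ksub n j)"
  proof
    fix g assume "g \<in> cochains n j"
    hence "{G. g G} \<in> Pow (ksub n j)" by (auto simp: cochains_def)
    moreover have "g = (\<lambda>G. G \<in> {G. g G})" by auto
    ultimately show "g \<in> (\<lambda>S G. G \<in> S) ` Pow (ksub n j)" by blast
  qed
qed (auto simp: cochains_def)

lemma finite_cochains: "finite (cochains n j)"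
  unfolding cochains_img by (simp add: finite_ksub)

lemma card_cochains: "card (cochains n j) \<le> 2 ^ card (ksub n j)"
  unfolding cochains_img using card_image_le[of "Pow (ksub n j)" "\<lambda>S G. G \<in> S"]
  by (simp add: finite_ksub card_Pow)

lemma support_Y:
  assumes "(a, X) \<in> set_pmf (Ymodel k n q)"
  shows "a \<in> set_pmf (Pi_pmf (ksub n k) False (\<lambda>_. bernoulli_pmf (1/2)))"
    and "\<And>H. H \<in> X \<Longrightarrow> H \<in> ksub n (k+1) \<and> good k a H"
proof -
  from assms obtain a' S where a': "a' \<in> set_pmf (Pi_pmf (ksub n k) False (\<lambda>_. bernoulli_pmf (1/2)))"
    and S: "S \<in> set_pmf (Pi_pmf {H \<in> ksub n (k+1). good k a' H} False (\<lambda>_. bernoulli_pmf q))"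
    and eq: "(a, X) = (a', {H. S H})"
    unfolding Ymodel_def by (auto simp: set_bind_pmf)
  show "a \<in> set_pmf (Pi_pmf (ksub n k) False (\<lambda>_. bernoulli_pmf (1/2)))" using a' eq by simp
  fix H assume "H \<in> X"
  hence "S H" using eq by simp
  moreover have "finite {H \<in> ksub n (k+1). good k a' H}" using finite_ksub by simp
  ultimately show "H \<in> ksub n (k+1) \<and> good k a H"
    using set_Pi_pmf_subset[of "{H \<in> ksub n (k+1). good k a' H}" False "\<lambda>_. bernoulli_pmf q"] S eq
    by auto
qed

lemma mapY: "map_pmf fst (Ymodel k n q) = Pi_pmf (ksub n k) False (\<lambda>_. bernoulli_pmf (1/2))"
  unfolding Ymodel_def by (simp add: map_bind_pmf bind_return_pmf' bind_pmf_const)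

lemma cocycle_good:
  assumes "\<And>H. H \<in> X \<Longrightarrow> H \<in> ksub n (k+1) \<and> good k a H"
  shows "is_cocycle X a"
  unfolding is_cocycle_def
proof
  fix H assume H: "H \<in> X"
  hence c: "card H = k + 1" and g: "good k a H" using assms by (auto simp: ksub_def)
  have "{G. G \<subseteq> H \<and> card G + 1 = card H \<and> a G} = {F. F \<subseteq> H \<and> card F = k \<and> a F}"
    using c by auto
  thus "\<not> cobdry a H" using g by (simp add: cobdry_def good_def)
qed


lemma prob_bad:
  assumes N: "card (ksub n k) > 0" and e: "e \<ge> 0"
  shows "measure_pmf.prob (Pi_pmf (ksub n k) False (\<lambda>_. bernoulli_pmf (1/2)))
     {a. \<not> (\<forall>g\<in>cochains n (k-1). cnorm n k (\<lambda>F. a F \<noteq> cobdry g F) \<ge> 1/2 - e)}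
     \<le> 2 ^ card (ksub n (k-1)) * exp (-2*e^2*card (ksub n k))"
proof -
  let ?P = "Pi_pmf (ksub n k) False (\<lambda>_. bernoulli_pmf (1/2))"
  let ?N = "card (ksub n k)"
  let ?B = "\<lambda>g. {a. real (card {x\<in>ksub n k. a x \<noteq> cobdry g x}) < (1/2 - e) * ?N}"
  have sub: "{a. \<not> (\<forall>g\<in>cochains n (k-1). cnorm n k (\<lambda>F. a F \<noteq> cobdry g F) \<ge> 1/2 - e)}
        \<subseteq> (\<Union>g\<in>cochains n (k-1). ?B g)"
  proof
    fix a assume "a \<in> {a. \<not> (\<forall>g\<in>cochains n (k-1). cnorm n k (\<lambda>F. a F \<noteq> cobdry g F) \<ge> 1/2 - e)}"
    then obtain g where g: "g \<in> cochains n (k-1)" and lt: "cnorm n k (\<lambda>F. a F \<noteq> cobdry g F) < 1/2 - e"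
      by auto
    from lt N have "real (card {x\<in>ksub n k. a x \<noteq> cobdry g x}) < (1/2 - e) * ?N"
      by (simp add: cnorm_def divide_less_eq)
    thus "a \<in> (\<Union>g\<in>cochains n (k-1). ?B g)" using g by blast
  qed
  have "measure_pmf.prob ?P {a. \<not> (\<forall>g\<in>cochains n (k-1). cnorm n k (\<lambda>F. a F \<noteq> cobdry g F) \<ge> 1/2 - e)}
      \<le> measure_pmf.prob ?P (\<Union>g\<in>cochains n (k-1). ?B g)"
    by (rule measure_pmf.finite_measure_mono[OF sub]) simp
  also have "\<dots> \<le> (\<Sum>g\<in>cochains n (k-1). measure_pmf.prob ?P (?B g))"
    by (rule measure_pmf.finite_measure_subadditive_finite) (auto simp: finite_cochains)
  also have "\<dots> \<le> (\<Sum>g\<in>cochains n (k-1). exp (-2*e^2*?N))"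
    by (intro sum_mono tail) (use N e finite_ksub in auto)
  also have "\<dots> = card (cochains n (k-1)) * exp (-2*e^2*?N)" by simp
  also have "\<dots> \<le> 2 ^ card (ksub n (k-1)) * exp (-2*e^2*?N)"
  proof (rule mult_right_mono)
    have "real (card (cochains n (k-1))) \<le> real (2 ^ card (ksub n (k-1)))"
      using card_cochains by (simp only: of_nat_le_iff)
    thus "real (card (cochains n (k-1))) \<le> 2 ^ card (ksub n (k-1))" by simp
  qed simp
  finally show ?thesis .
qed

lemma binom_rel: "k \<ge> 1 \<Longrightarrow> k \<le> n \<Longrightarrow> k * (n choose k) = (n - k + 1) * (n choose (k-1))"
proof -
  assume "k \<ge> 1" "k \<le> n"
  then obtain j where j: "k = Suc j" "j < n" by (cases k) auto
  have "Suc j * (n choose Suc j) = (n - j) * (n choose j)"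
    using binomial_absorption[of j n] binomial_absorb_comp[of n j] by simp
  moreover have "n - j = n - k + 1" using j by simp
  ultimately show ?thesis using j by simp
qed

lemma asym:
  fixes e :: real and k n :: nat
  assumes k: "k \<ge> 1" and e: "e > 0" and n: "n \<ge> k" and n2: "real k \<le> e^2 * (real n - k + 1)"
  shows "2 ^ (n choose (k-1)) * exp (-2*e^2*(n choose k)) \<le> exp (-(e^2) * (n / k))"
proof -
  let ?N = "real (n choose k)" and ?M = "real (n choose (k-1))"
  have rel: "k * ?N = (real n - k + 1) * ?M"
    using binom_rel[OF k n] n by (metis of_nat_1 of_nat_add of_nat_diff of_nat_mult)
  have pos: "real n - k + 1 > 0" using n by simp
  have "k * ?N \<le> e^2 * (real n - k + 1) * ?N" using n2 by (intro mult_right_mono) auto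
  hence "(real n - k + 1) * ?M \<le> (real n - k + 1) * (e^2 * ?N)" using rel by (simp add: algebra_simps)
  hence MN: "?M \<le> e^2 * ?N" using pos by simp
  have "(real n / k) ^ 1 \<le> (real n / k) ^ k"
    using n k by (intro power_increasing) (auto simp: field_simps)
  also have "\<dots> \<le> ?N" by (rule binomial_ge_n_over_k_pow_k[OF n])
  finally have Nge: "real n / k \<le> ?N" by simp
  have "(2::real) ^ (n choose (k-1)) = exp (?M * ln 2)"
    by (simp add: exp_of_nat_mult)
  also have "\<dots> \<le> exp ?M" using ln_2_less_1 by (intro exp_mono) (simp add: mult_left_le)
  finally have "2 ^ (n choose (k-1)) * exp (-2*e^2*?N) \<le> exp ?M * exp (-2*e^2*?N)" by simp
  also have "\<dots> = exp (?M - 2*e^2*?N)" by (simp add: exp_add[symmetric])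
  also have "\<dots> \<le> exp (-(e^2) * (n / k))"
  proof (rule exp_mono)
    have "e^2 * (real n / k) \<le> e^2 * ?N" using Nge by (rule mult_left_mono) simp
    thus "?M - 2*e^2*?N \<le> -(e^2) * (real n / k)" using MN by linarith
  qed
  finally show ?thesis .
qed


theorem mainTheorem13:
  fixes k :: nat and p :: "nat \<Rightarrow> real" and \<epsilon> :: real
  assumes "k \<ge> 2"
    and "\<And>n. 0 \<le> p n \<and> p n \<le> 1"
    and "\<epsilon> > 0"
  shows "(\<lambda>n. measure_pmf.prob (Ymodel k n (p n))
            {(a, Xk). is_cocycle Xk a \<and> class_norm n k a \<ge> 1/2 - \<epsilon>
                      \<and> cohom_nonzero n k Xk})
         \<longlonglongrightarrow> 1"
proof -
  define e where "e = min \<epsilon> (1/4)"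
  have e: "e > 0" "e \<le> \<epsilon>" "e \<le> 1/4" using assms(3) by (auto simp: e_def)
  have k1: "k \<ge> 1" using assms(1) by simp
  define E where "E n = {(a, Xk). is_cocycle Xk a \<and> class_norm n k a \<ge> 1/2 - \<epsilon>
                      \<and> cohom_nonzero n k Xk}" for n
  define f where "f n = measure_pmf.prob (Ymodel k n (p n)) (E n)" for n
  have lower: "1 - exp (-(e^2) * (real n / k)) \<le> f n"
    if n: "n \<ge> k" and n2: "real k \<le> e^2 * (real n - k + 1)" for n
  proof -
    let ?Y = "Ymodel k n (p n)"
    let ?A = "Pi_pmf (ksub n k) False (\<lambda>_. bernoulli_pmf (1/2))"
    define G where "G = {a. \<forall>g\<in>cochains n (k-1). cnorm n k (\<lambda>F. a F \<noteq> cobdry g F) \<ge> 1/2 - e}"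
    have sub: "{y. fst y \<in> G} \<inter> set_pmf ?Y \<subseteq> E n"
    proof clarify
      fix a X assume aG: "fst (a, X) \<in> G" and y: "(a, X) \<in> set_pmf ?Y"
      have aA: "a \<in> set_pmf ?A" and faces: "\<And>H. H \<in> X \<Longrightarrow> H \<in> ksub n (k+1) \<and> good k a H"
        using support_Y[OF y] by auto
      have coc: "is_cocycle X a" by (rule cocycle_good[OF faces])
      have ne: "cochains n (k-1) \<noteq> {}" by (auto simp: cochains_def)
      have cn: "cnorm n k (\<lambda>F. a F \<noteq> cobdry g F) \<ge> 1/2 - e" if "g \<in> cochains n (k-1)" for g
        using aG that by (auto simp: G_def)
      have cls: "class_norm n k a \<ge> 1/2 - \<epsilon>"
        unfolding class_norm_def
      proof (rule cINF_greatest[OF ne])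
        fix g assume "g \<in> cochains n (k-1)"
        thus "1/2 - \<epsilon> \<le> cnorm n k (\<lambda>F. a F \<noteq> cobdry g F)" using cn e by fastforce
      qed
      have ac: "a \<in> cochains n k"
        using set_Pi_pmf_subset[OF finite_ksub, of n k False "\<lambda>_. bernoulli_pmf (1/2)"] aA
        by (auto simp: cochains_def)
      have "\<exists>F\<in>ksub n k. a F \<noteq> cobdry g F" if g: "g \<in> cochains n (k-1)" for g
      proof (rule ccontr)
        assume "\<not> ?thesis"
        hence "{F\<in>ksub n k. a F \<noteq> cobdry g F} = {}" by auto
        hence "card {F\<in>ksub n k. a F \<noteq> cobdry g F} = 0" by (simp only: card.empty)
        hence "cnorm n k (\<lambda>F. a F \<noteq> cobdry g F) = 0" unfolding cnorm_def by simp
        thus False using cn[OF g] e by simp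
      qed
      hence "cohom_nonzero n k X" using ac coc unfolding cohom_nonzero_def by blast
      thus "(a, X) \<in> E n" using coc cls by (simp add: E_def)
    qed
    have Npos: "card (ksub n k) > 0"
      using n by (simp add: card_ksub)
    have "f n = measure_pmf.prob ?Y (E n \<inter> set_pmf ?Y)" by (simp add: f_def measure_Int_set_pmf)
    also have "\<dots> \<ge> measure_pmf.prob ?Y ({y. fst y \<in> G} \<inter> set_pmf ?Y)"
      by (rule measure_pmf.finite_measure_mono) (use sub in auto)
    finally have "f n \<ge> measure_pmf.prob ?Y {y. fst y \<in> G}" by (simp add: measure_Int_set_pmf)
    also have "measure_pmf.prob ?Y {y. fst y \<in> G} = measure_pmf.prob (map_pmf fst ?Y) G"
      by (simp add: vimage_def)
    also have "\<dots> = measure_pmf.prob ?A G" by (simp add: mapY)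
    also have "G = UNIV - {a. \<not> (\<forall>g\<in>cochains n (k-1). cnorm n k (\<lambda>F. a F \<noteq> cobdry g F) \<ge> 1/2 - e)}"
      by (auto simp: G_def)
    also have "measure_pmf.prob ?A \<dots> = 1 - measure_pmf.prob ?A {a. \<not> (\<forall>g\<in>cochains n (k-1). cnorm n k (\<lambda>F. a F \<noteq> cobdry g F) \<ge> 1/2 - e)}"
      using measure_pmf.prob_compl[of "{a. \<not> (\<forall>g\<in>cochains n (k-1). cnorm n k (\<lambda>F. a F \<noteq> cobdry g F) \<ge> 1/2 - e)}" ?A]
      by simp
    finally have "f n \<ge> 1 - measure_pmf.prob ?A {a. \<not> (\<forall>g\<in>cochains n (k-1). cnorm n k (\<lambda>F. a F \<noteq> cobdry g F) \<ge> 1/2 - e)}" .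
    moreover have "measure_pmf.prob ?A {a. \<not> (\<forall>g\<in>cochains n (k-1). cnorm n k (\<lambda>F. a F \<noteq> cobdry g F) \<ge> 1/2 - e)}
        \<le> 2 ^ card (ksub n (k-1)) * exp (-2*e^2*card (ksub n k))"
      by (rule prob_bad[OF Npos]) (use e in simp)
    moreover have "2 ^ card (ksub n (k-1)) * exp (-2*e^2*card (ksub n k)) \<le> exp (-(e^2) * (real n / k))"
      unfolding card_ksub by (rule asym[OF k1 e(1) n n2])
    ultimately show ?thesis by linarith
  qed
  obtain n0 :: nat where n0: "real k + real k / e^2 \<le> real n0" using real_arch_simple by blast
  have ev: "eventually (\<lambda>n. 1 - exp (-(e^2) * (real n / k)) \<le> f n) sequentially"
    unfolding eventually_at_top_linorder
  proof (intro exI allI impI)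
    fix n assume nn: "n \<ge> n0 + k"
    show "1 - exp (-(e^2) * (real n / k)) \<le> f n"
    proof (rule lower)
      show "n \<ge> k" using nn by simp
      have "real k / e^2 \<le> real n - k + 1" using n0 nn by simp
      thus "real k \<le> e^2 * (real n - k + 1)" using e(1) by (simp add: divide_le_eq mult.commute)
    qed
  qed
  have ev2: "eventually (\<lambda>n. f n \<le> 1) sequentially" by (simp add: f_def)
  have lim: "(\<lambda>n. 1 - exp (-(e^2) * (real n / k))) \<longlonglongrightarrow> 1"
    using e(1) k1 by real_asymp
  have "f \<longlonglongrightarrow> 1" by (rule tendsto_sandwich[OF ev ev2 lim tendsto_const])
  thus ?thesis unfolding f_def[abs_def] E_def by simp
qed

end
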